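(* Let $n,k$ be integers with $2\le k\le n$, let $\varepsilon\in[0,1)$ and let $\gamma:=\frac{k(n-k)}{2n(n-1)}$. Let $\mathcal{I}=(I_1,\dots,I_m)$ be a finite sequence of $k$-element subsets of $[n]$ such that: (1) for every $i\in[n]$, the fraction $f_{ii}:=\frac{1}{m}|\{\ell\in[m]: i\in I_\ell\}|$ lies in $\left[\frac{k}{n}-\varepsilon\gamma,\frac{k}{n}+\varepsilon\gamma\right]$; (2) for every pair of distinct $i,j\in[n]$, the fraction $f_{ij}:=\frac{1}{m}|\{\ell\in[m]: \{i,j\}\subseteq I_\ell\}|$ lies in $\left[\frac{k(k-1)}{n(n-1)}-\varepsilon\gamma,\frac{k(k-1)}{n(n-1)}+\varepsilon\gamma\right]$. Then there is a scaling $\alpha>0$ such that for all matrices $M\in\mathbb{R}^{n\times n}$, $$\|M-\alpha\,T_{\mathcal{I}}(M)\|_F\le(1+\varepsilon)\frac{n-k}{n+k-2}\|M\|_F.$$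
   Context: For $M\in\mathbb{R}^{n\times n}$ and $I\subseteq[n]$, $M^I$ denotes the $n\times n$ matrix obtained from $M$ by setting to zero all entries outside rows and columns indexed by $I$ (i.e. $(M^I)_{ij}=M_{ij}$ if $i,j\in I$ and $0$ otherwise). The partial averaging operator is $T_{\mathcal{I}}(M):=\frac{1}{m}\sum_{\ell=1}^m M^{I_\ell}$ (the sum taken over the sequence, with multiplicity). $\|\cdot\|_F$ is the Frobenius norm. *)

theory Defs
  imports Complex_Main
begin

text \<open>n x n real matrices are represented as functions nat => nat => real; only
entries with indices in {0..<n} (our rendering of [n]) matter.\<close>

definition restr :: "(nat \<Rightarrow> nat \<Rightarrow> real) \<Rightarrow> nat set \<Rightarrow> (nat \<Rightarrow> nat \<Rightarrow> real)" where
  "restr M I = (\<lambda>i j. if i \<in> I \<and> j \<in> I then M i j else 0)"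

definition T_avg :: "nat set list \<Rightarrow> (nat \<Rightarrow> nat \<Rightarrow> real) \<Rightarrow> (nat \<Rightarrow> nat \<Rightarrow> real)" where
  "T_avg Is M = (\<lambda>i j. (1 / real (length Is)) * (\<Sum>l<length Is. restr M (Is ! l) i j))"

definition frob :: "nat \<Rightarrow> (nat \<Rightarrow> nat \<Rightarrow> real) \<Rightarrow> real" where
  "frob n M = sqrt (\<Sum>i<n. \<Sum>j<n. (M i j)^2)"

definition freq1 :: "nat set list \<Rightarrow> nat \<Rightarrow> real" where
  "freq1 Is i = real (card {l. l < length Is \<and> i \<in> Is ! l}) / real (length Is)"

definition freq2 :: "nat set list \<Rightarrow> nat \<Rightarrow> nat \<Rightarrow> real" where
  "freq2 Is i j = real (card {l. l < length Is \<and> {i, j} \<subseteq> Is ! l}) / real (length Is)"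

end

theory Submission
  imports Defs
begin

lemma T_avg_eq:
  "T_avg Is M i j = (real (card {l. l < length Is \<and> i \<in> Is ! l \<and> j \<in> Is ! l}) / real (length Is)) * M i j"
proof -
  have "(\<Sum>l<length Is. restr M (Is ! l) i j)
      = (\<Sum>l\<in>{l\<in>{..<length Is}. i \<in> Is ! l \<and> j \<in> Is ! l}. M i j)"
    unfolding restr_def by (rule sum.inter_filter[symmetric]) simp
  also have "\<dots> = real (card {l. l < length Is \<and> i \<in> Is ! l \<and> j \<in> Is ! l}) * M i j"
  proof -
    have "{l\<in>{..<length Is}. i \<in> Is ! l \<and> j \<in> Is ! l} = {l. l < length Is \<and> i \<in> Is ! l \<and> j \<in> Is ! l}" by auto
    then show ?thesis by simp
  qed
  finally show ?thesis by (simp add: T_avg_def)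
qed

lemma frob_scale:
  assumes "c \<ge> 0" and "\<And>i j. i < n \<Longrightarrow> j < n \<Longrightarrow> \<bar>h i j\<bar> \<le> c"
  shows "frob n (\<lambda>i j. h i j * M i j) \<le> c * frob n M"
proof -
  have "(\<Sum>i<n. \<Sum>j<n. (h i j * M i j)^2) \<le> (\<Sum>i<n. \<Sum>j<n. c^2 * (M i j)^2)"
  proof (intro sum_mono)
    fix i j assume "i \<in> {..<n}" "j \<in> {..<n}"
    then have "\<bar>h i j\<bar> \<le> c" using assms(2) by auto
    then have "(h i j)^2 \<le> c^2" by (metis abs_ge_zero abs_le_square_iff abs_of_nonneg assms(1) power_mono)
    then show "(h i j * M i j)^2 \<le> c^2 * (M i j)^2"
      by (simp add: power_mult_distrib mult_right_mono)
  qed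
  also have "\<dots> = c^2 * (\<Sum>i<n. \<Sum>j<n. (M i j)^2)"
    by (simp add: sum_distrib_left)
  finally have "sqrt (\<Sum>i<n. \<Sum>j<n. (h i j * M i j)^2) \<le> sqrt (c^2 * (\<Sum>i<n. \<Sum>j<n. (M i j)^2))"
    using real_sqrt_le_mono by blast
  also have "\<dots> = c * frob n M" using assms(1) by (simp add: real_sqrt_mult frob_def)
  finally show ?thesis by (simp add: frob_def)
qed

theorem lemma8:
  fixes n k :: nat and \<epsilon> :: real and Is :: "nat set list"
  assumes "2 \<le> k" and "k \<le> n"
    and "0 \<le> \<epsilon>" and "\<epsilon> < 1"
    and "\<forall>l < length Is. Is ! l \<subseteq> {0..<n} \<and> card (Is ! l) = k"
    and "\<forall>i < n. \<bar>freq1 Is i - real k / real n\<bar>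
            \<le> \<epsilon> * (real k * (real n - real k) / (2 * real n * (real n - 1)))"
    and "\<forall>i < n. \<forall>j < n. i \<noteq> j \<longrightarrow>
            \<bar>freq2 Is i j - real k * (real k - 1) / (real n * (real n - 1))\<bar>
            \<le> \<epsilon> * (real k * (real n - real k) / (2 * real n * (real n - 1)))"
  shows "\<exists>\<alpha>>0. \<forall>M :: nat \<Rightarrow> nat \<Rightarrow> real.
           frob n (\<lambda>i j. M i j - \<alpha> * T_avg Is M i j)
             \<le> (1 + \<epsilon>) * ((real n - real k) / (real n + real k - 2)) * frob n M"
proof -
  define p where "p = real k / real n"
  define q where "q = real k * (real k - 1) / (real n * (real n - 1))"
  define \<gamma> where "\<gamma> = real k * (real n - real k) / (2 * real n * (real n - 1))"
  define c0 where "c0 = (real n - real k) / (real n + real k - 2)"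
  define \<alpha> where "\<alpha> = 2 / (p + q)"
  define g where "g i j = real (card {l. l < length Is \<and> i \<in> Is ! l \<and> j \<in> Is ! l}) / real (length Is)" for i j
  have n1: "real n - 1 > 0" "real n > 0" "real k \<ge> 2" "real n \<ge> real k" using assms(1,2) by auto
  have pq: "p + q = real k * (real n + real k - 2) / (real n * (real n - 1))"
    unfolding p_def q_def using n1 by (simp add: field_simps)
  have pqpos: "p + q > 0" unfolding pq using n1 by simp
  have pmq: "p - q = 2 * \<gamma>"
    unfolding p_def q_def \<gamma>_def using n1 by (simp add: field_simps)
  have apos: "\<alpha> > 0" unfolding \<alpha>_def using pqpos by simp
  have nk: "real n + real k - 2 > 0" using n1 by linarith
  have ag: "\<alpha> * \<gamma> = c0"
  proof -
    define a where "a = real n"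
    define b where "b = real k"
    have a1: "a - 1 > 0" "a > 0" "b > 0" "a + b - 2 > 0" using n1 nk unfolding a_def b_def by auto
    have "2 / (b * (a + b - 2) / (a * (a - 1))) * (b * (a - b) / (2 * a * (a - 1)))
        = (2 * (a * (a - 1)) * (b * (a - b))) / ((b * (a + b - 2)) * (2 * a * (a - 1)))"
      by simp
    also have "\<dots> = ((a - b) / (a + b - 2)) * ((2 * a * (a - 1) * b) / (2 * a * (a - 1) * b))"
      by (simp add: ac_simps)
    also have "\<dots> = (a - b) / (a + b - 2)" using a1 by simp
    finally show ?thesis unfolding \<alpha>_def c0_def \<gamma>_def pq a_def b_def .
  qed
  have c0nn: "c0 \<ge> 0" unfolding c0_def using n1 by simp
  have ap: "1 - \<alpha> * p = - c0" and aq: "1 - \<alpha> * q = c0"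
  proof -
    have "\<alpha> * (p + q) = 2" unfolding \<alpha>_def using pqpos by (simp add: field_simps)
    moreover have "\<alpha> * (p - q) = 2 * c0" using pmq ag by (simp add: algebra_simps)
    ultimately show "1 - \<alpha> * p = - c0" "1 - \<alpha> * q = c0" by (simp_all add: algebra_simps)
  qed
  have bound: "\<bar>1 - \<alpha> * g i j\<bar> \<le> (1 + \<epsilon>) * c0" if "i < n" "j < n" for i j
  proof (cases "i = j")
    case True
    have "g i j = freq1 Is i" unfolding g_def freq1_def True by simp
    then have d: "\<bar>g i j - p\<bar> \<le> \<epsilon> * \<gamma>" using assms(6) that unfolding p_def \<gamma>_def by auto
    have "1 - \<alpha> * g i j = - c0 - \<alpha> * (g i j - p)" using ap by (simp add: algebra_simps)
    moreover have "\<bar>\<alpha> * (g i j - p)\<bar> \<le> \<epsilon> * c0"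
      using d apos ag by (simp add: abs_mult) (metis mult.left_commute mult_left_mono less_imp_le)
    ultimately show ?thesis using c0nn by (simp add: abs_le_iff algebra_simps)
  next
    case False
    have "g i j = freq2 Is i j" unfolding g_def freq2_def by simp
    then have d: "\<bar>g i j - q\<bar> \<le> \<epsilon> * \<gamma>" using assms(7) that False unfolding q_def \<gamma>_def by auto
    have "1 - \<alpha> * g i j = c0 - \<alpha> * (g i j - q)" using aq by (simp add: algebra_simps)
    moreover have "\<bar>\<alpha> * (g i j - q)\<bar> \<le> \<epsilon> * c0"
      using d apos ag by (simp add: abs_mult) (metis mult.left_commute mult_left_mono less_imp_le)
    ultimately show ?thesis using c0nn by (simp add: abs_le_iff algebra_simps)
  qed
  show ?thesis
  proof (intro exI[of _ \<alpha>] conjI allI)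
    show "\<alpha> > 0" by (rule apos)
    fix M :: "nat \<Rightarrow> nat \<Rightarrow> real"
    have eq: "(\<lambda>i j. M i j - \<alpha> * T_avg Is M i j) = (\<lambda>i j. (1 - \<alpha> * g i j) * M i j)"
      by (auto simp: T_avg_eq g_def algebra_simps)
    have "frob n (\<lambda>i j. (1 - \<alpha> * g i j) * M i j) \<le> ((1 + \<epsilon>) * c0) * frob n M"
      by (rule frob_scale) (use c0nn assms(3) bound in auto)
    then show "frob n (\<lambda>i j. M i j - \<alpha> * T_avg Is M i j)
             \<le> (1 + \<epsilon>) * ((real n - real k) / (real n + real k - 2)) * frob n M"
      unfolding eq c0_def by simp
  qed
qed

end
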